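(* In the setting below, take $S=[0,\infty)$. Suppose that for each $\theta\in\Theta$ the function $g(\theta,\cdot)$ is coordinatewise monotone: for $1\le n\le\infty$ and $\mathbf x=(x_i)_{i\le^*n}$, $\mathbf y=(y_i)_{i\le^*n}$ with $x_i\le y_i$ for all $i$, $g(\theta,\mathbf x)\le g(\theta,\mathbf y)$; and that $g(\theta,\cdot)$ is continuous with respect to coordinatewise increasing limits. Suppose the sequence $(T^n(\delta_0))_{n\ge0}$ is tight. Then $T^n(\delta_0)\to\mu$ weakly for some probability measure $\mu$ on $[0,\infty)$, $\mu$ is a fixed point of $T$, and the invariant RTP with marginal $\mu$ is endogenous.
   Context: Setting. Let $(S,\mathcal S)$ and $(\Theta,\mathcal T)$ be measurable spaces and $\Theta^*=\Theta\times\bigsqcup_{0\le m\le\infty}S^m$ (disjoint union; $S^0$ a single point, $S^\infty$ the countable product). Let $g:\Theta^*\to S$ be measurable and $\nu$ a probability measure on $\Theta\times\{0,1,2,\dots,\infty\}$. Write $i\le^* N$ to mean $i\le N$ if $N<\infty$ and $i<\infty$ if $N=\infty$. The induced map $T$ sends a probability measure $\mu$ on $S$ to the law of $g(\xi,X_i,1\le i\le^*N)$, where $(\xi,N)\sim\nu$ and $(X_i)_{i\ge1}$ are i.i.d. with law $\mu$, independent of $(\xi,N)$. A fixed point is a $\mu$ with $T(\mu)=\mu$. Let $\mathbb T$ be the set of finite words $\mathbf i=i_1\cdots i_d$ of positive integers (the empty word $\emptyset$ is the root, $\mathrm{gen}(\mathbf i)=d$, the children of $\mathbf i$ are $\mathbf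 ij$, $j\ge1$), and let $(\xi_{\mathbf i},N_{\mathbf i})$, $\mathbf i\in\mathbb T$, be i.i.d. with law $\nu$. An invariant recursive tree process (RTP) with marginal $\mu$ is a family of $S$-valued random variables $(X_{\mathbf i})_{\mathbf i\in\mathbb T}$ defined on the same probability space such that: each $X_{\mathbf i}$ has law $\mu$; $X_{\mathbf i}=g(\xi_{\mathbf i},X_{\mathbf ij},1\le j\le^*N_{\mathbf i})$ a.s. for every $\mathbf i$; and for every $d$ the variables $\{X_{\mathbf i}:\mathrm{gen}(\mathbf i)=d\}$ are i.i.d. and independent of $\{(\xi_{\mathbf i},N_{\mathbf i}):\mathrm{gen}(\mathbf i)<d\}$. The RTP is endogenous if $X_\emptyset$ is measurable with respect to $\mathcal G=\sigma((\xi_{\mathbf i},N_{\mathbf i}),\mathbf i\in\mathbb T)$. $\delta_0$ is the point mass at $0$. *)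

theory Defs
  imports "HOL-Probability.Probability"
begin

text \<open>
Encoding conventions.
 \<^item> S = [0,\<infinity>) is represented inside the reals; laws on S are real distributions
   (sets = borel) giving mass 1 to {0..}.
 \<^item> Theta* = Theta \<times> (disjoint union of S^m, 0 \<le> m \<le> \<infinity>) is encoded as triples
   (theta, m, x) with m :: enat and x :: nat \<Rightarrow> real, where only the coordinates
   x i with i < m (0-indexed) matter.  So g :: 't \<Rightarrow> enat \<Rightarrow> (nat \<Rightarrow> real) \<Rightarrow> real.
 \<^item> Words of the Ulam-Harris tree are nat lists; the children of w are w @ [j],
   j a natural number (0-indexed), and child j is "used" iff enat j < N_w.
\<close>

definition S_set :: "real set" where
  "S_set = {0..}"

definition S_meas :: "real measure" where
  "S_meas = restrict_space borel S_set"

definition depends_on_prefix :: "('t \<Rightarrow> enat \<Rightarrow> (nat \<Rightarrow> real) \<Rightarrow> real) \<Rightarrow> bool" where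
  "depends_on_prefix g \<longleftrightarrow>
     (\<forall>\<theta> m x y. (\<forall>i. enat i < m \<longrightarrow> x i = y i) \<longrightarrow> g \<theta> m x = g \<theta> m y)"

definition law_on_S :: "real measure \<Rightarrow> bool" where
  "law_on_S \<mu> \<longleftrightarrow> real_distribution \<mu> \<and> emeasure \<mu> S_set = 1"

definition Tmap :: "('t \<times> enat) measure \<Rightarrow> ('t \<Rightarrow> enat \<Rightarrow> (nat \<Rightarrow> real) \<Rightarrow> real)
                     \<Rightarrow> real measure \<Rightarrow> real measure" where
  "Tmap \<nu> g \<mu> =
     distr (\<nu> \<Otimes>\<^sub>M (\<Pi>\<^sub>M i\<in>(UNIV::nat set). restrict_space \<mu> S_set)) borel
           (\<lambda>((\<theta>, m), x). g \<theta> m x)"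

definition G_sets :: "'w measure \<Rightarrow> ('t \<times> enat) measure \<Rightarrow> (nat list \<Rightarrow> 'w \<Rightarrow> 't \<times> enat) \<Rightarrow> 'w measure" where
  "G_sets P M\<nu> XiN = sigma (space P) (\<Union>w. {XiN w -` A \<inter> space P | A. A \<in> sets M\<nu>})"

definition invariant_RTP ::
  "'w measure \<Rightarrow> 't measure \<Rightarrow> ('t \<times> enat) measure \<Rightarrow> ('t \<Rightarrow> enat \<Rightarrow> (nat \<Rightarrow> real) \<Rightarrow> real)
   \<Rightarrow> real measure \<Rightarrow> (nat list \<Rightarrow> 'w \<Rightarrow> 't \<times> enat) \<Rightarrow> (nat list \<Rightarrow> 'w \<Rightarrow> real) \<Rightarrow> bool" where
  "invariant_RTP P T \<nu> g \<mu> XiN X \<longleftrightarrow>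
     prob_space P \<and>
     \<comment> \<open>(xi_w, N_w), w in the tree, are i.i.d. with law nu\<close>
     (\<forall>w. XiN w \<in> measurable P (T \<Otimes>\<^sub>M count_space UNIV) \<and> distr P (T \<Otimes>\<^sub>M count_space UNIV) (XiN w) = \<nu>) \<and>
     prob_space.indep_vars P (\<lambda>_. T \<Otimes>\<^sub>M count_space UNIV) XiN UNIV \<and>
     \<comment> \<open>each X_w has law mu\<close>
     (\<forall>w. X w \<in> borel_measurable P \<and> distr P borel (X w) = \<mu>) \<and>
     \<comment> \<open>recursion X_w = g(xi_w, X_{wj}, j <* N_w) a.s.\<close>
     (\<forall>w. AE \<omega> in P. X w \<omega> = g (fst (XiN w \<omega>)) (snd (XiN w \<omega>)) (\<lambda>j. X (w @ [j]) \<omega>)) \<and>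
     \<comment> \<open>generation d values are i.i.d. and independent of the innovations of generations < d\<close>
     (\<forall>d. prob_space.indep_vars P (\<lambda>_. borel) X {w. length w = d} \<and>
          prob_space.indep_set P
            (sets (vimage_algebra (space P) (\<lambda>\<omega>. \<lambda>w\<in>{w. length w = d}. X w \<omega>)
                     (\<Pi>\<^sub>M w\<in>{w. length w = d}. borel)))
            (sets (vimage_algebra (space P) (\<lambda>\<omega>. \<lambda>w\<in>{w. length w < d}. XiN w \<omega>)
                     (\<Pi>\<^sub>M w\<in>{w. length w < d}. T \<Otimes>\<^sub>M count_space UNIV))))"

definition endogenous ::
  "'w measure \<Rightarrow> ('t \<times> enat) measure \<Rightarrow> (nat list \<Rightarrow> 'w \<Rightarrow> 't \<times> enat) \<Rightarrow> (nat list \<Rightarrow> 'w \<Rightarrow> real) \<Rightarrow> bool" where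
  "endogenous P M\<nu> XiN X \<longleftrightarrow>
     (\<exists>Y. Y \<in> borel_measurable (G_sets P M\<nu> XiN) \<and> (AE \<omega> in P. X [] \<omega> = Y \<omega>))"

end

theory Submission
  imports Defs
begin

lemma coords_indep:
  assumes M: "\<And>i. i \<in> I \<Longrightarrow> prob_space (M i)" and I: "I \<noteq> {}"
  shows "prob_space.indep_vars (PiM I M) M (\<lambda>i x. x i) I"
proof -
  interpret P: prob_space "PiM I M" using M by (rule prob_space_PiM)
  have "distr (PiM I M) (PiM I M) (\<lambda>x. \<lambda>i\<in>I. x i) = distr (PiM I M) (PiM I M) (\<lambda>x. x)"
    by (rule distr_cong) (auto simp: space_PiM PiE_def extensional_restrict)
  also have "\<dots> = PiM I M" by simp
  also have "\<dots> = PiM I (\<lambda>i. distr (PiM I M) (M i) (\<lambda>x. x i))"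
    by (rule PiM_cong) (auto simp: distr_PiM_component M)
  finally show ?thesis
    by (subst P.indep_vars_iff_distr_eq_PiM'[OF I]) auto
qed

lemma restr_distr:
  assumes f: "f \<in> measurable M S_meas"
  shows "restrict_space (distr M borel f) S_set = distr M S_meas f"
proof -
  have fb: "f \<in> borel_measurable M" and fs: "f \<in> space M \<rightarrow> S_set"
    using f by (auto simp: S_meas_def measurable_restrict_space2_iff)
  have Sb: "S_set \<in> sets borel" by (simp add: S_set_def)
  show ?thesis
  proof (rule measure_eqI)
    show "sets (restrict_space (distr M borel f) S_set) = sets (distr M S_meas f)"
      by (simp add: S_meas_def sets_restrict_space)
  next
    fix A assume A: "A \<in> sets (restrict_space (distr M borel f) S_set)"
    then have AS: "A \<subseteq> S_set" and Ab: "A \<in> sets borel"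
      using Sb by (auto simp: sets_restrict_space_iff)
    have "emeasure (restrict_space (distr M borel f) S_set) A = emeasure (distr M borel f) A"
      using AS Sb by (intro emeasure_restrict_space) auto
    also have "\<dots> = emeasure M (f -` A \<inter> space M)"
      using Ab fb by (simp add: emeasure_distr)
    also have "\<dots> = emeasure (distr M S_meas f) A"
      using A f Sb by (subst emeasure_distr) (auto simp: S_meas_def sets_restrict_space_iff)
    finally show "emeasure (restrict_space (distr M borel f) S_set) A = emeasure (distr M S_meas f) A" .
  qed
qed

locale L15 =
  fixes T :: "'t measure" and \<nu> :: "('t \<times> enat) measure"
    and g :: "'t \<Rightarrow> enat \<Rightarrow> (nat \<Rightarrow> real) \<Rightarrow> real"
  assumes nu_prob: "prob_space \<nu>"
    and nu_sets: "sets \<nu> = sets (T \<Otimes>\<^sub>M count_space UNIV)"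
    and g_prefix: "depends_on_prefix g"
    and g_meas: "(\<lambda>((\<theta>, m), x). g \<theta> m x)
        \<in> measurable ((T \<Otimes>\<^sub>M count_space UNIV) \<Otimes>\<^sub>M (\<Pi>\<^sub>M i\<in>(UNIV::nat set). S_meas)) S_meas"
    and g_mono: "\<And>\<theta> n x y. \<theta> \<in> space T \<Longrightarrow> 1 \<le> n \<Longrightarrow>
        (\<forall>i. x i \<in> S_set) \<Longrightarrow> (\<forall>i. y i \<in> S_set) \<Longrightarrow>
        (\<forall>i. enat i < n \<longrightarrow> x i \<le> y i) \<Longrightarrow> g \<theta> n x \<le> g \<theta> n y"
    and g_cont: "\<And>\<theta> n xs x. \<theta> \<in> space T \<Longrightarrow> 1 \<le> n \<Longrightarrow>
        (\<forall>k i. xs k i \<in> S_set) \<Longrightarrow> (\<forall>i. x i \<in> S_set) \<Longrightarrow>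
        (\<forall>i. enat i < n \<longrightarrow> incseq (\<lambda>k. xs k i) \<and> (\<lambda>k. xs k i) \<longlonglongrightarrow> x i) \<Longrightarrow>
        (\<lambda>k. g \<theta> n (xs k)) \<longlonglongrightarrow> g \<theta> n x"
    and tight_iter: "tight (\<lambda>n. (Tmap \<nu> g ^^ n) (return borel 0))"
begin

definition Om :: "(nat list \<Rightarrow> 't \<times> enat) measure" where
  "Om = PiM UNIV (\<lambda>_. \<nu>)"

definition sh :: "nat \<Rightarrow> (nat list \<Rightarrow> 't \<times> enat) \<Rightarrow> (nat list \<Rightarrow> 't \<times> enat)" where
  "sh j x = (\<lambda>v. x (j # v))"

definition step :: "((nat list \<Rightarrow> 't \<times> enat) \<Rightarrow> real) \<Rightarrow> (nat list \<Rightarrow> 't \<times> enat) \<Rightarrow> real" where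
  "step f x = g (fst (x [])) (snd (x [])) (\<lambda>j. f (sh j x))"

lemma space_nu: "space \<nu> = space T \<times> UNIV"
  using sets_eq_imp_space_eq[OF nu_sets] by (simp add: space_pair_measure)

lemma prob_Om: "prob_space Om"
  unfolding Om_def by (intro prob_space_PiM nu_prob)

lemma space_Om: "space Om = {x. \<forall>u. x u \<in> space \<nu>}"
  unfolding Om_def by (auto simp: space_PiM PiE_def Pi_def)

lemma coord_meas: "(\<lambda>x. x u) \<in> measurable Om \<nu>"
  unfolding Om_def by simp

lemma sh_meas: "sh j \<in> measurable Om Om"
  unfolding Om_def sh_def
  by (rule measurable_PiM_single') (auto simp: space_PiM PiE_def Pi_def)

lemma sh_space: "x \<in> space Om \<Longrightarrow> sh j x \<in> space Om"
  by (simp add: space_Om sh_def)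

lemma S_meas_space: "space S_meas = S_set"
  by (simp add: S_meas_def space_restrict_space)

lemma step_meas:
  assumes f: "f \<in> measurable Om S_meas"
  shows "step f \<in> measurable Om S_meas"
proof -
  have a: "(\<lambda>x. x []) \<in> measurable Om (T \<Otimes>\<^sub>M count_space UNIV)"
    using coord_meas[of "[]"] by (simp add: measurable_cong_sets[OF refl nu_sets])
  have b: "(\<lambda>x. \<lambda>j. f (sh j x)) \<in> measurable Om (\<Pi>\<^sub>M i\<in>(UNIV::nat set). S_meas)"
    by (rule measurable_PiM_single') (auto intro: measurable_compose[OF sh_meas f] measurable_space[OF f] sh_space)
  have "(\<lambda>x. (x [], \<lambda>j. f (sh j x))) \<in> measurable Om ((T \<Otimes>\<^sub>M count_space UNIV) \<Otimes>\<^sub>M (\<Pi>\<^sub>M i\<in>(UNIV::nat set). S_meas))"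
    using a b by (rule measurable_Pair)
  from measurable_compose[OF this g_meas] show ?thesis
    by (simp add: step_def[abs_def] case_prod_beta)
qed

lemma G_meas_gen:
  assumes "sets N = sets (\<Pi>\<^sub>M i\<in>(UNIV::nat set). S_meas)"
  shows "(\<lambda>((\<theta>, m), x). g \<theta> m x) \<in> borel_measurable (\<nu> \<Otimes>\<^sub>M N)"
proof -
  have "(\<lambda>((\<theta>, m), x). g \<theta> m x) \<in> measurable (\<nu> \<Otimes>\<^sub>M N) S_meas"
    using g_meas by (subst measurable_cong_sets[OF sets_pair_measure_cong[OF nu_sets assms] refl])
  moreover have "(\<lambda>x. x) \<in> measurable S_meas borel"
    unfolding S_meas_def by (intro measurable_restrict_space1) simp
  ultimately show ?thesis using measurable_compose by blast
qed

lemma sh_meas_gen: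
  assumes "\<And>v. j # v \<in> K"
  shows "(\<lambda>X. \<lambda>v. X (j # v)) \<in> measurable (PiM K (\<lambda>_. \<nu>)) Om"
  unfolding Om_def using assms
  by (intro measurable_PiM_single') (auto simp: space_PiM PiE_def Pi_def)

lemma step_distr:
  assumes f: "f \<in> measurable Om S_meas"
  shows "distr Om borel (step f) = Tmap \<nu> g (distr Om borel f)"
proof -
  let ?N = "\<lambda>_::nat list. \<nu>"
  let ?C = "- {[]::nat list}"
  define P' where "P' = PiM ?C ?N"
  define E where "E = (\<lambda>(x::'t \<times> enat, X::nat list \<Rightarrow> 't \<times> enat). X([] := x))"
  define W where "W = (\<lambda>X. \<lambda>j::nat. f (sh j X))"
  define G where "G = (\<lambda>((\<theta>::'t, m::enat), x::nat \<Rightarrow> real). g \<theta> m x)"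
  interpret nu: prob_space \<nu> by (rule nu_prob)
  have PP': "prob_space P'" unfolding P'_def by (intro prob_space_PiM nu_prob)
  interpret P': prob_space P' by (rule PP')
  have ins: "insert [] ?C = UNIV" by auto
  have E_distr: "distr (\<nu> \<Otimes>\<^sub>M P') Om E = Om"
    using distr_pair_PiM_eq_PiM[of ?C ?N "[]"] nu_prob unfolding ins P'_def E_def Om_def by simp
  have E_meas: "E \<in> measurable (\<nu> \<Otimes>\<^sub>M P') Om"
    unfolding Om_def E_def P'_def
  proof (rule measurable_PiM_single')
    fix u :: "nat list"
    show "(\<lambda>\<omega>. (case \<omega> of (x, X) \<Rightarrow> X([] := x)) u) \<in> measurable (\<nu> \<Otimes>\<^sub>M PiM ?C ?N) \<nu>"
    proof (cases "u = []")
      case True then show ?thesis by (simp add: case_prod_beta)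
    next
      case False
      then have eq: "(\<lambda>\<omega>. (case \<omega> of (x, X) \<Rightarrow> X([] := x)) u) = (\<lambda>\<omega>. snd \<omega> u)"
        by (auto simp: fun_eq_iff)
      have m: "(\<lambda>\<omega>. snd \<omega> u) \<in> measurable (\<nu> \<Otimes>\<^sub>M PiM ?C ?N) \<nu>"
        using False by (intro measurable_compose[OF measurable_snd measurable_component_singleton]) auto
      show ?thesis by (subst eq) (rule m)
    qed
  qed (auto simp: space_pair_measure space_PiM PiE_def Pi_def)
  have W_meas: "W \<in> measurable P' (\<Pi>\<^sub>M i\<in>(UNIV::nat set). S_meas)"
    unfolding W_def sh_def[abs_def] P'_def
    by (rule measurable_PiM_single')
       (auto intro!: measurable_compose[OF sh_meas_gen f] measurable_space[OF f]
             simp: space_PiM PiE_def Pi_def Om_def)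
  have W_distr: "distr P' (\<Pi>\<^sub>M i\<in>(UNIV::nat set). S_meas) W = (\<Pi>\<^sub>M i\<in>(UNIV::nat set). distr Om S_meas f)"
  proof -
    have ind: "P'.indep_vars ?N (\<lambda>u x. x u) ?C"
      unfolding P'_def by (rule coords_indep) (auto intro: nu_prob)
    have ind2: "P'.indep_vars (\<lambda>j. PiM (range (Cons j)) ?N) (\<lambda>j \<omega>. restrict (\<lambda>i. \<omega> i) (range (Cons j))) (UNIV::nat set)"
      by (rule P'.indep_vars_restrict[OF ind]) (auto simp: disjoint_family_on_def)
    have ind3: "P'.indep_vars (\<lambda>_. S_meas) (\<lambda>j \<omega>. (\<lambda>r. f (\<lambda>v. r (j # v))) (restrict (\<lambda>i. \<omega> i) (range (Cons j)))) (UNIV::nat set)"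
      by (rule P'.indep_vars_compose2[OF ind2]) (rule measurable_compose[OF sh_meas_gen f], simp)
    have eqW: "(\<lambda>j \<omega>. (\<lambda>r. f (\<lambda>v. r (j # v))) (restrict (\<lambda>i. \<omega> i) (range (Cons j)))) = (\<lambda>j X. f (sh j X))"
      by (simp add: sh_def)
    have ind4: "P'.indep_vars (\<lambda>_. S_meas) (\<lambda>j X. f (sh j X)) (UNIV::nat set)"
      using ind3 unfolding eqW .
    have rv: "(\<lambda>X. f (sh j X)) \<in> measurable P' S_meas" for j
      unfolding P'_def sh_def using measurable_compose[OF sh_meas_gen[of j "- {[]}"] f] by simp
    have "distr P' (\<Pi>\<^sub>M i\<in>(UNIV::nat set). S_meas) (\<lambda>x. \<lambda>j\<in>UNIV. f (sh j x))
        = (\<Pi>\<^sub>M j\<in>(UNIV::nat set). distr P' S_meas (\<lambda>X. f (sh j X)))"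
      using ind4 P'.indep_vars_iff_distr_eq_PiM[where I="UNIV::nat set" and M'="\<lambda>_. S_meas" and X="\<lambda>j X. f (sh j X)"] rv
      by simp
    also have "\<dots> = (\<Pi>\<^sub>M j\<in>(UNIV::nat set). distr Om S_meas f)"
    proof (rule PiM_cong[OF refl])
      fix j :: nat
      have shm: "sh j \<in> measurable P' Om"
        unfolding P'_def sh_def[abs_def] by (rule sh_meas_gen) simp
      have "distr P' Om (sh j) = Om"
      proof -
        have "distr P' (\<Pi>\<^sub>M i\<in>UNIV. ?N (Cons j i)) (\<lambda>\<omega>. \<lambda>n\<in>UNIV. \<omega> (Cons j n)) = (\<Pi>\<^sub>M i\<in>UNIV. ?N (Cons j i))"
          unfolding P'_def by (rule distr_PiM_reindex) (auto intro: nu_prob)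
        then show ?thesis by (simp add: Om_def sh_def[abs_def] restrict_def)
      qed
      then show "distr P' S_meas (\<lambda>X. f (sh j X)) = distr Om S_meas f"
        using distr_distr[OF f shm] by (simp add: comp_def)
    qed
    finally show ?thesis unfolding W_def by (simp add: restrict_def)
  qed
  have Sb: "(\<lambda>x. x) \<in> measurable S_meas borel"
    unfolding S_meas_def by (intro measurable_restrict_space1) simp
  have sf: "step f \<in> borel_measurable Om"
    using measurable_compose[OF step_meas[OF f] Sb] by simp
  have GM: "G \<in> borel_measurable (\<nu> \<Otimes>\<^sub>M (\<Pi>\<^sub>M i\<in>(UNIV::nat set). S_meas))"
    unfolding G_def by (rule G_meas_gen) simp
  have PM: "(\<lambda>(x, X). (x, W X)) \<in> measurable (\<nu> \<Otimes>\<^sub>M P') (\<nu> \<Otimes>\<^sub>M (\<Pi>\<^sub>M i\<in>(UNIV::nat set). S_meas))"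
    using W_meas by (simp add: case_prod_beta')
  have "distr Om borel (step f) = distr (distr (\<nu> \<Otimes>\<^sub>M P') Om E) borel (step f)"
    by (simp add: E_distr)
  also have "\<dots> = distr (\<nu> \<Otimes>\<^sub>M P') borel (step f \<circ> E)"
    by (rule distr_distr[OF sf E_meas])
  also have "\<dots> = distr (\<nu> \<Otimes>\<^sub>M P') borel (\<lambda>p. G ((\<lambda>(x, X). (x, W X)) p))"
    by (rule distr_cong) (auto simp: E_def G_def W_def step_def sh_def)
  also have "\<dots> = distr (distr (\<nu> \<Otimes>\<^sub>M P') (\<nu> \<Otimes>\<^sub>M (\<Pi>\<^sub>M i\<in>(UNIV::nat set). S_meas)) (\<lambda>(x, X). (x, W X))) borel G"
    using distr_distr[OF GM PM] by (simp add: comp_def)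
  also have "distr (\<nu> \<Otimes>\<^sub>M P') (\<nu> \<Otimes>\<^sub>M (\<Pi>\<^sub>M i\<in>(UNIV::nat set). S_meas)) (\<lambda>(x, X). (x, W X))
      = distr \<nu> \<nu> (\<lambda>x. x) \<Otimes>\<^sub>M distr P' (\<Pi>\<^sub>M i\<in>(UNIV::nat set). S_meas) W"
    using pair_measure_distr[OF measurable_ident W_meas prob_space_imp_sigma_finite[OF P'.prob_space_distr[OF W_meas]], of \<nu>]
    by (simp add: id_def)
  also have "\<dots> = \<nu> \<Otimes>\<^sub>M (\<Pi>\<^sub>M i\<in>(UNIV::nat set). distr Om S_meas f)"
    by (simp add: W_distr)
  also have "(\<Pi>\<^sub>M i\<in>(UNIV::nat set). distr Om S_meas f) = (\<Pi>\<^sub>M i\<in>(UNIV::nat set). restrict_space (distr Om borel f) S_set)"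
    by (simp add: restr_distr[OF f])
  finally show ?thesis unfolding Tmap_def G_def .
qed

primrec Fit :: "nat \<Rightarrow> (nat list \<Rightarrow> 't \<times> enat) \<Rightarrow> real" where
  "Fit 0 = (\<lambda>_. 0)"
| "Fit (Suc n) = step (Fit n)"

lemma S_set_iff: "x \<in> S_set \<longleftrightarrow> 0 \<le> x"
  by (simp add: S_set_def)

lemma Fit_meas: "Fit n \<in> measurable Om S_meas"
  by (induction n) (auto intro: step_meas simp: S_meas_space S_set_def)

lemma Fit_S: "x \<in> space Om \<Longrightarrow> Fit n x \<in> S_set"
  using measurable_space[OF Fit_meas] by (simp add: S_meas_space)

lemma Fit_law: "distr Om borel (Fit n) = (Tmap \<nu> g ^^ n) (return borel 0)"
proof (induction n)
  case 0
  interpret prob_space Om by (rule prob_Om)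
  show ?case by simp
next
  case (Suc n)
  then show ?case using step_distr[OF Fit_meas[of n]] by simp
qed

lemma g_mono':
  assumes p: "p \<in> space \<nu>" and ab: "\<And>j. a j \<in> S_set" "\<And>j. b j \<in> S_set" "\<And>j. a j \<le> b j"
  shows "g (fst p) (snd p) a \<le> g (fst p) (snd p) b"
proof (cases "snd p = 0")
  case True
  have "g (fst p) (snd p) a = g (fst p) (snd p) b"
    using g_prefix[unfolded depends_on_prefix_def, rule_format, of "snd p" a b "fst p"] True by simp
  then show ?thesis by simp
next
  case False
  then have "1 \<le> snd p" by (cases "snd p") (auto simp: one_enat_def zero_enat_def)
  moreover have "fst p \<in> space T" using p by (auto simp: space_nu)
  ultimately show ?thesis using ab by (intro g_mono) auto
qed

lemma step_mono:
  assumes x: "x \<in> space Om"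
    and ff: "\<And>y. y \<in> space Om \<Longrightarrow> f y \<in> S_set \<and> f' y \<in> S_set \<and> f y \<le> f' y"
  shows "step f x \<le> step f' x"
  unfolding step_def using x ff sh_space by (intro g_mono') (auto simp: space_Om)

lemma Fit_mono: "x \<in> space Om \<Longrightarrow> Fit n x \<le> Fit (Suc n) x"
proof (induction n arbitrary: x)
  case 0
  then show ?case using Fit_S[of x 1] by (simp add: S_set_iff)
next
  case (Suc n)
  have "step (Fit n) x \<le> step (Fit (Suc n)) x"
    by (rule step_mono[OF Suc.prems]) (use Suc.IH Fit_S in blast)
  then show ?case by (simp del: Fit.simps(2) add: Fit.simps(2)[of "Suc n"] Fit.simps(2)[of n])
qed

lemma Fit_inc: "x \<in> space Om \<Longrightarrow> incseq (\<lambda>n. Fit n x)"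
  using Fit_mono by (simp add: incseq_Suc_iff)

lemma Fit_borel: "Fit n \<in> borel_measurable Om"
proof -
  have "(\<lambda>x. x) \<in> measurable S_meas borel"
    unfolding S_meas_def by (intro measurable_restrict_space1) simp
  then show ?thesis using measurable_compose[OF Fit_meas] by blast
qed

definition Fe :: "(nat list \<Rightarrow> 't \<times> enat) \<Rightarrow> ereal" where
  "Fe x = (SUP n. ereal (Fit n x))"

definition Finf :: "(nat list \<Rightarrow> 't \<times> enat) \<Rightarrow> real" where
  "Finf x = real_of_ereal (Fe x)"

lemma Fe_meas: "Fe \<in> borel_measurable Om"
  unfolding Fe_def[abs_def] using Fit_borel by measurable

lemma Fe_nonneg: "0 \<le> Fe x"
proof -
  have "ereal (Fit 0 x) \<le> Fe x" unfolding Fe_def by (rule SUP_upper) simp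
  then show ?thesis by (simp add: zero_ereal_def)
qed

lemma Finf_nonneg: "0 \<le> Finf x"
  unfolding Finf_def using Fe_nonneg by (simp add: real_of_ereal_pos)

lemma Finf_borel: "Finf \<in> borel_measurable Om"
  unfolding Finf_def[abs_def] using Fe_meas by measurable

lemma Finf_meas: "Finf \<in> measurable Om S_meas"
  unfolding S_meas_def using Finf_borel Finf_nonneg
  by (intro measurable_restrict_space2) (auto simp: S_set_def)

lemma Fe_le_iff: "Fe x \<le> ereal b \<longleftrightarrow> (\<forall>n. Fit n x \<le> b)"
  unfolding Fe_def by (simp add: SUP_le_iff)

lemma Fit_tendsto_Fe: "x \<in> space Om \<Longrightarrow> (\<lambda>n. ereal (Fit n x)) \<longlonglongrightarrow> Fe x"
  unfolding Fe_def using Fit_inc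
  by (intro LIMSEQ_SUP) (auto simp: incseq_def)

lemma Fit_tendsto_Finf:
  assumes x: "x \<in> space Om" and fin: "Fe x < \<infinity>"
  shows "(\<lambda>n. Fit n x) \<longlonglongrightarrow> Finf x"
proof -
  have "Fe x = ereal (Finf x)"
    unfolding Finf_def using fin Fe_nonneg[of x] by (simp add: ereal_real)
  then show ?thesis using Fit_tendsto_Fe[OF x] by (simp add: lim_ereal)
qed

lemma AE_fin: "AE x in Om. Fe x < \<infinity>"
proof -
  interpret prob_space Om by (rule prob_Om)
  define A where "A = {x \<in> space Om. Fe x < \<infinity>}"
  have Aev: "A \<in> events" unfolding A_def using Fe_meas by measurable
  have "1 \<le> prob A + e" if e: "e > 0" for e
  proof -
    obtain a b where ab: "a < b" and mb: "\<And>n. measure ((Tmap \<nu> g ^^ n) (return borel 0)) {a<..b} > 1 - e"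
      using tight_iter e unfolding tight_def by blast
    define B where "B n = {x \<in> space Om. Fit n x \<le> b}" for n
    have Bev: "B n \<in> events" for n unfolding B_def using Fit_borel by measurable
    have pB: "prob (B n) > 1 - e" for n
    proof -
      have "1 - e < measure (distr Om borel (Fit n)) {a<..b}" using mb[of n] by (simp add: Fit_law)
      also have "\<dots> = prob (Fit n -` {a<..b} \<inter> space Om)"
        using Fit_borel by (simp add: measure_distr)
      also have "\<dots> \<le> prob (B n)"
        using Bev by (intro finite_measure_mono) (auto simp: B_def)
      finally show ?thesis .
    qed
    have dec: "decseq B"
      unfolding decseq_def B_def using Fit_inc by (auto simp: incseq_def intro: order_trans)
    have lim: "(\<lambda>n. prob (B n)) \<longlonglongrightarrow> prob (\<Inter>n. B n)"
      using Bev dec by (intro finite_Lim_measure_decseq) auto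
    have "1 - e \<le> prob (\<Inter>n. B n)"
      using pB by (intro LIMSEQ_le_const[OF lim]) (auto intro: less_imp_le)
    also have "\<dots> \<le> prob A"
    proof (intro finite_measure_mono Aev subsetI)
      fix x assume "x \<in> (\<Inter>n. B n)"
      then have "x \<in> space Om" "\<forall>n. Fit n x \<le> b" by (auto simp: B_def)
      then have "Fe x \<le> ereal b" "x \<in> space Om" by (auto simp: Fe_le_iff)
      then show "x \<in> A" unfolding A_def by (auto intro: le_less_trans)
    qed
    finally show ?thesis by simp
  qed
  then have "1 \<le> prob A" by (rule field_le_epsilon)
  then have "prob A = 1" using prob_le_1[of A] by simp
  then have "AE x in Om. x \<in> A" by (rule AE_prob_1)
  then show ?thesis by (auto simp: A_def)
qed

lemma sh_distr: "distr Om Om (sh j) = Om"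
proof -
  have "distr Om (\<Pi>\<^sub>M i\<in>UNIV. (\<lambda>_::nat list. \<nu>) (Cons j i)) (\<lambda>\<omega>. \<lambda>n\<in>UNIV. \<omega> (Cons j n)) = (\<Pi>\<^sub>M i\<in>UNIV. (\<lambda>_::nat list. \<nu>) (Cons j i))"
    unfolding Om_def by (rule distr_PiM_reindex) (auto intro: nu_prob)
  then show ?thesis by (simp add: Om_def sh_def[abs_def] restrict_def)
qed

lemma AE_children: "AE x in Om. \<forall>j. Fe (sh j x) < \<infinity>"
proof (subst AE_all_countable, intro allI)
  fix j
  have "AE x in distr Om Om (sh j). Fe x < \<infinity>" unfolding sh_distr by (rule AE_fin)
  then show "AE x in Om. Fe (sh j x) < \<infinity>" by (rule AE_distrD[OF sh_meas])
qed

lemma step_Finf: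
  assumes x: "x \<in> space Om" and fin: "\<And>j. Fe (sh j x) < \<infinity>"
  shows "Fe x = ereal (step Finf x)"
proof -
  have conv: "(\<lambda>n. Fit (Suc n) x) \<longlonglongrightarrow> step Finf x"
  proof (cases "snd (x []) = 0")
    case True
    have "Fit (Suc n) x = step Finf x" for n
      using g_prefix[unfolded depends_on_prefix_def, rule_format, of "snd (x [])" "\<lambda>j. Fit n (sh j x)" "\<lambda>j. Finf (sh j x)" "fst (x [])"] True
      by (simp add: step_def)
    then show ?thesis by simp
  next
    case False
    then have n1: "1 \<le> snd (x [])" by (cases "snd (x [])") (auto simp: one_enat_def zero_enat_def)
    have th: "fst (x []) \<in> space T" using x by (auto simp: space_Om space_nu mem_Times_iff)
    have shx: "sh j x \<in> space Om" for j using x by (rule sh_space)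
    have "(\<lambda>k. g (fst (x [])) (snd (x [])) (\<lambda>j. Fit k (sh j x))) \<longlonglongrightarrow> g (fst (x [])) (snd (x [])) (\<lambda>j. Finf (sh j x))"
      using th n1 Fit_S[OF shx] Finf_nonneg Fit_inc[OF shx] Fit_tendsto_Finf[OF shx fin]
      by (intro g_cont) (auto simp: S_set_def)
    then show ?thesis by (simp add: step_def)
  qed
  have "(\<lambda>n. ereal (Fit (Suc n) x)) \<longlonglongrightarrow> Fe x"
    using Fit_tendsto_Fe[OF x] by (rule LIMSEQ_Suc)
  moreover have "(\<lambda>n. ereal (Fit (Suc n) x)) \<longlonglongrightarrow> ereal (step Finf x)"
    using conv by (simp add: lim_ereal)
  ultimately show ?thesis by (rule LIMSEQ_unique)
qed

lemma AE_Finf_step: "AE x in Om. Fe x = ereal (Finf x) \<and> Finf x = step Finf x"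
  using AE_children
proof (rule AE_mp, intro AE_I2 impI)
  fix x assume x: "x \<in> space Om" and "\<forall>j. Fe (sh j x) < \<infinity>"
  then have e: "Fe x = ereal (step Finf x)" by (intro step_Finf) auto
  then have "Finf x = step Finf x" by (simp add: Finf_def)
  then show "Fe x = ereal (Finf x) \<and> Finf x = step Finf x" using e by simp
qed

definition mu :: "real measure" where
  "mu = distr Om borel Finf"

lemma mu_fixed: "Tmap \<nu> g mu = mu"
proof -
  have Sb: "(\<lambda>x. x) \<in> measurable S_meas borel"
    unfolding S_meas_def by (intro measurable_restrict_space1) simp
  have sf: "step Finf \<in> borel_measurable Om"
    using measurable_compose[OF step_meas[OF Finf_meas] Sb] by simp
  have "mu = distr Om borel (step Finf)"
    unfolding mu_def
    by (rule distr_cong_AE[OF refl refl _ Finf_borel sf]) (rule AE_mp[OF AE_Finf_step], auto)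
  also have "\<dots> = Tmap \<nu> g mu"
    unfolding mu_def by (rule step_distr[OF Finf_meas])
  finally show ?thesis by simp
qed

lemma mu_law: "law_on_S mu"
proof -
  interpret prob_space Om by (rule prob_Om)
  have rd: "real_distribution mu"
    unfolding mu_def real_distribution_def real_distribution_axioms_def
    using prob_space_distr[OF Finf_borel] by simp
  have "emeasure mu S_set = emeasure Om (Finf -` S_set \<inter> space Om)"
    unfolding mu_def using Finf_borel by (subst emeasure_distr) (auto simp: S_set_def)
  also have "Finf -` S_set \<inter> space Om = space Om" using Finf_nonneg by (auto simp: S_set_def)
  finally show ?thesis using rd by (simp add: law_on_S_def emeasure_space_1)
qed

lemma mu_weak: "weak_conv_m (\<lambda>n. (Tmap \<nu> g ^^ n) (return borel 0)) mu"
  unfolding weak_conv_m_def weak_conv_def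
proof (intro allI impI)
  fix b :: real
  interpret prob_space Om by (rule prob_Om)
  define B where "B n = {x \<in> space Om. Fit n x \<le> b}" for n
  have Bev: "B n \<in> events" for n unfolding B_def using Fit_borel by measurable
  have cB: "cdf ((Tmap \<nu> g ^^ n) (return borel 0)) b = prob (B n)" for n
  proof -
    have "cdf ((Tmap \<nu> g ^^ n) (return borel 0)) b = measure (distr Om borel (Fit n)) {..b}"
      by (simp add: Fit_law cdf_def)
    also have "\<dots> = prob (Fit n -` {..b} \<inter> space Om)"
      using Fit_borel by (simp add: measure_distr)
    also have "Fit n -` {..b} \<inter> space Om = B n" by (auto simp: B_def)
    finally show ?thesis .
  qed
  have dec: "decseq B"
    unfolding decseq_def B_def using Fit_inc by (auto simp: incseq_def intro: order_trans)
  have lim: "(\<lambda>n. prob (B n)) \<longlonglongrightarrow> prob (\<Inter>n. B n)"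
    using Bev dec by (intro finite_Lim_measure_decseq) auto
  have IB: "(\<Inter>n. B n) = {x \<in> space Om. Fe x \<le> ereal b}"
    by (auto simp: B_def Fe_le_iff)
  have "prob {x \<in> space Om. Fe x \<le> ereal b} = prob (Finf -` {..b} \<inter> space Om)"
  proof (rule measure_eq_AE)
    show "AE x in Om. (x \<in> {x \<in> space Om. Fe x \<le> ereal b}) = (x \<in> Finf -` {..b} \<inter> space Om)"
      by (rule AE_mp[OF AE_Finf_step]) (auto intro!: AE_I2)
    show "{x \<in> space Om. Fe x \<le> ereal b} \<in> events" using Fe_meas by measurable
    show "Finf -` {..b} \<inter> space Om \<in> events" using Finf_borel by measurable
  qed
  also have "\<dots> = cdf mu b"
    unfolding mu_def cdf_def using Finf_borel by (simp add: measure_distr)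
  finally show "(\<lambda>n. cdf ((Tmap \<nu> g ^^ n) (return borel 0)) b) \<longlonglongrightarrow> cdf mu b"
    using lim unfolding cB IB by simp
qed

lemma distr_nu_cong:
  assumes f: "f \<in> measurable M \<nu>"
  shows "distr M \<nu> f = distr M (T \<Otimes>\<^sub>M count_space UNIV) f"
proof (rule measure_eqI)
  show "sets (distr M \<nu> f) = sets (distr M (T \<Otimes>\<^sub>M count_space UNIV) f)"
    by (simp add: nu_sets)
next
  fix A assume "A \<in> sets (distr M \<nu> f)"
  then have A: "A \<in> sets \<nu>" by simp
  have f': "f \<in> measurable M (T \<Otimes>\<^sub>M count_space UNIV)"
    using f by (simp add: measurable_cong_sets[OF refl nu_sets])
  show "emeasure (distr M \<nu> f) A = emeasure (distr M (T \<Otimes>\<^sub>M count_space UNIV) f) A"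
    using A f f' nu_sets by (simp add: emeasure_distr)
qed

lemma endog:
  fixes P :: "'w measure" and XiN :: "nat list \<Rightarrow> 'w \<Rightarrow> 't \<times> enat" and X :: "nat list \<Rightarrow> 'w \<Rightarrow> real"
  assumes rtp: "invariant_RTP P T \<nu> g mu XiN X"
  shows "endogenous P \<nu> XiN X"
proof -
  have PP: "prob_space P" using rtp by (simp add: invariant_RTP_def)
  interpret prob_space P by (rule PP)
  have XiM: "XiN u \<in> measurable P (T \<Otimes>\<^sub>M count_space UNIV)"
    and Xid: "distr P (T \<Otimes>\<^sub>M count_space UNIV) (XiN u) = \<nu>"
    and ind0: "indep_vars (\<lambda>_. T \<Otimes>\<^sub>M count_space UNIV) XiN UNIV"
    and XM: "X u \<in> borel_measurable P"
    and Xd: "distr P borel (X u) = mu"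
    and rec: "AE \<omega> in P. X u \<omega> = g (fst (XiN u \<omega>)) (snd (XiN u \<omega>)) (\<lambda>j. X (u @ [j]) \<omega>)" for u
    using rtp unfolding invariant_RTP_def by auto
  have Xi_m: "XiN u \<in> measurable P \<nu>" for u
    using XiM by (simp add: measurable_cong_sets[OF refl nu_sets])
  define Xi where "Xi \<omega> = (\<lambda>u. XiN u \<omega>)" for \<omega>
  have Xi_meas: "Xi \<in> measurable P Om"
    unfolding Om_def Xi_def
    by (rule measurable_PiM_single') (auto intro: Xi_m measurable_space[OF Xi_m] simp: space_PiM PiE_def Pi_def)
  have ind: "indep_vars (\<lambda>_. \<nu>) XiN UNIV"
    using ind0 unfolding indep_vars_def by (simp add: nu_sets measurable_cong_sets[OF refl nu_sets])
  have Xi_distr: "distr P Om Xi = Om"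
  proof -
    have "distr P (PiM UNIV (\<lambda>_. \<nu>)) (\<lambda>x. \<lambda>i\<in>UNIV. XiN i x) = PiM UNIV (\<lambda>i. distr P \<nu> (XiN i))"
      using ind indep_vars_iff_distr_eq_PiM[where I=UNIV and M'="\<lambda>_. \<nu>" and X=XiN] Xi_m by simp
    also have "\<dots> = PiM UNIV (\<lambda>i. \<nu>)"
      by (simp add: distr_nu_cong[OF Xi_m] Xid)
    finally show ?thesis unfolding Om_def Xi_def by (simp add: restrict_def)
  qed
  define Y where "Y \<omega> = Finf (Xi \<omega>)" for \<omega>
  let ?E = "(\<Union>w. {XiN w -` A \<inter> space P | A. A \<in> sets \<nu>})"
  have Esub: "?E \<subseteq> Pow (space P)" by auto
  have spG: "space (G_sets P \<nu> XiN) = space P"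
    unfolding G_sets_def using Esub by (rule space_measure_of)
  have setsG: "sets (G_sets P \<nu> XiN) = sigma_sets (space P) ?E"
    unfolding G_sets_def using Esub by (rule sets_measure_of)
  have XiG: "XiN u \<in> measurable (G_sets P \<nu> XiN) \<nu>" for u
  proof (rule measurableI)
    fix \<omega> assume "\<omega> \<in> space (G_sets P \<nu> XiN)"
    then show "XiN u \<omega> \<in> space \<nu>" using measurable_space[OF Xi_m] spG by auto
  next
    fix A assume "A \<in> sets \<nu>"
    then have "XiN u -` A \<inter> space P \<in> ?E" by blast
    then show "XiN u -` A \<inter> space (G_sets P \<nu> XiN) \<in> sets (G_sets P \<nu> XiN)"
      unfolding spG setsG by (rule sigma_sets.Basic)
  qed
  have XiGm: "Xi \<in> measurable (G_sets P \<nu> XiN) Om"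
    unfolding Om_def Xi_def
    by (rule measurable_PiM_single') (auto intro: XiG measurable_space[OF XiG] simp: space_PiM PiE_def Pi_def)
  have YG: "Y \<in> borel_measurable (G_sets P \<nu> XiN)"
    unfolding Y_def using measurable_compose[OF XiGm Finf_borel] .
  have YM: "Y \<in> borel_measurable P"
    unfolding Y_def using measurable_compose[OF Xi_meas Finf_borel] .
  have Yd: "distr P borel Y = mu"
    unfolding mu_def Y_def using distr_distr[OF Finf_borel Xi_meas] Xi_distr by (simp add: comp_def)
  have a1: "AE \<omega> in P. \<forall>u. 0 \<le> X u \<omega>"
  proof (subst AE_all_countable, intro allI)
    fix u
    have "AE y in mu. 0 \<le> y"
      unfolding mu_def using Finf_nonneg by (subst AE_distr_iff[OF Finf_borel]) auto
    then have "AE y in distr P borel (X u). 0 \<le> y" by (subst Xd[of u])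
    then show "AE \<omega> in P. 0 \<le> X u \<omega>" by (subst (asm) AE_distr_iff[OF XM]) auto
  qed
  have a2: "AE \<omega> in P. \<forall>u. X u \<omega> = g (fst (XiN u \<omega>)) (snd (XiN u \<omega>)) (\<lambda>j. X (u @ [j]) \<omega>)"
    using rec by (subst AE_all_countable) auto
  have a3: "AE \<omega> in P. Fe (Xi \<omega>) = ereal (Finf (Xi \<omega>))"
  proof -
    have "AE x in distr P Om Xi. Fe x = ereal (Finf x)"
      unfolding Xi_distr by (rule AE_mp[OF AE_Finf_step]) auto
    then show ?thesis by (rule AE_distrD[OF Xi_meas])
  qed
  have le: "AE \<omega> in P. Y \<omega> \<le> X [] \<omega>"
    using a1 a2 a3 AE_space
  proof (eventually_elim)
    case (elim \<omega>)
    have sp: "(\<lambda>v. XiN (w @ v) \<omega>) \<in> space Om" for w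
      using elim(4) measurable_space[OF Xi_m] by (auto simp: space_Om)
    have claim: "Fit n (\<lambda>v. XiN (u @ v) \<omega>) \<le> X u \<omega>" for n u
    proof (induction n arbitrary: u)
      case 0
      show ?case using elim(1) by simp
    next
      case (Suc n)
      have pu: "XiN u \<omega> \<in> space \<nu>" using elim(4) measurable_space[OF Xi_m] by auto
      have "Fit (Suc n) (\<lambda>v. XiN (u @ v) \<omega>) = g (fst (XiN u \<omega>)) (snd (XiN u \<omega>)) (\<lambda>j. Fit n (\<lambda>v. XiN ((u @ [j]) @ v) \<omega>))"
        by (simp add: step_def sh_def)
      also have "\<dots> \<le> g (fst (XiN u \<omega>)) (snd (XiN u \<omega>)) (\<lambda>j. X (u @ [j]) \<omega>)"
      proof -
        have h1: "Fit n (\<lambda>v. XiN (u @ j # v) \<omega>) \<le> X (u @ [j]) \<omega>" for j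
          using Suc.IH[of "u @ [j]"] by simp
        have h2: "0 \<le> Fit n (\<lambda>v. XiN (u @ j # v) \<omega>)" for j
          using Fit_S[OF sp[of "u @ [j]"], of n] by (simp add: S_set_def)
        show ?thesis by (rule g_mono'[OF pu]) (use h1 h2 elim(1) in \<open>auto simp: S_set_def\<close>)
      qed
      also have "\<dots> = X u \<omega>" by (rule sym[OF elim(2)[rule_format]])
      finally show ?case .
    qed
    have "Fe (Xi \<omega>) \<le> ereal (X [] \<omega>)"
      unfolding Fe_def Xi_def using claim[of _ "[]"] by (auto intro: SUP_least)
    from ord_eq_le_trans[OF elim(3)[symmetric] this] show "Y \<omega> \<le> X [] \<omega>" unfolding Y_def by simp
  qed
  have bnd: "norm (arctan x) \<le> pi" for x
    using arctan_bounded[of x] pi_gt_zero by (simp add: abs_le_iff)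
  have intX: "integrable P (\<lambda>\<omega>. arctan (X [] \<omega>))"
    by (rule integrable_const_bound[where B=pi]) (use bnd XM in auto)
  have intY: "integrable P (\<lambda>\<omega>. arctan (Y \<omega>))"
    by (rule integrable_const_bound[where B=pi]) (use bnd YM in auto)
  have eqX: "(\<integral>\<omega>. arctan (X [] \<omega>) \<partial>P) = integral\<^sup>L mu arctan"
    using integral_distr[OF XM, of arctan] by (simp add: Xd)
  have eqY: "(\<integral>\<omega>. arctan (Y \<omega>) \<partial>P) = integral\<^sup>L mu arctan"
    using integral_distr[OF YM, of arctan] by (simp add: Yd)
  define D where "D \<omega> = arctan (X [] \<omega>) - arctan (Y \<omega>)" for \<omega>
  have intD: "integrable P D" unfolding D_def using intX intY by (rule Bochner_Integration.integrable_diff)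
  have D0: "integral\<^sup>L P D = 0"
    unfolding D_def using Bochner_Integration.integral_diff[OF intX intY] eqX eqY by simp
  have Dnn: "AE \<omega> in P. 0 \<le> D \<omega>"
    using le by eventually_elim (simp add: D_def arctan_le_iff)
  have "AE \<omega> in P. D \<omega> = 0"
    using integral_nonneg_eq_0_iff_AE[OF intD Dnn] D0 by simp
  then have "AE \<omega> in P. X [] \<omega> = Y \<omega>"
    by eventually_elim (simp add: D_def arctan_eq_iff)
  then show ?thesis unfolding endogenous_def using YG by blast
qed

end
theorem lemma15:
  fixes T :: "'t measure"
    and \<nu> :: "('t \<times> enat) measure"
    and g :: "'t \<Rightarrow> enat \<Rightarrow> (nat \<Rightarrow> real) \<Rightarrow> real"
  assumes nu_prob: "prob_space \<nu>"
    and nu_sets: "sets \<nu> = sets (T \<Otimes>\<^sub>M count_space UNIV)"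
    and g_prefix: "depends_on_prefix g"
    and g_meas: "(\<lambda>((\<theta>, m), x). g \<theta> m x)
        \<in> measurable ((T \<Otimes>\<^sub>M count_space UNIV) \<Otimes>\<^sub>M (\<Pi>\<^sub>M i\<in>(UNIV::nat set). S_meas)) S_meas"
    and g_mono: "\<And>\<theta> n x y. \<theta> \<in> space T \<Longrightarrow> 1 \<le> n \<Longrightarrow>
        (\<forall>i. x i \<in> S_set) \<Longrightarrow> (\<forall>i. y i \<in> S_set) \<Longrightarrow>
        (\<forall>i. enat i < n \<longrightarrow> x i \<le> y i) \<Longrightarrow> g \<theta> n x \<le> g \<theta> n y"
    and g_cont: "\<And>\<theta> n xs x. \<theta> \<in> space T \<Longrightarrow> 1 \<le> n \<Longrightarrow>
        (\<forall>k i. xs k i \<in> S_set) \<Longrightarrow> (\<forall>i. x i \<in> S_set) \<Longrightarrow>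
        (\<forall>i. enat i < n \<longrightarrow> incseq (\<lambda>k. xs k i) \<and> (\<lambda>k. xs k i) \<longlonglongrightarrow> x i) \<Longrightarrow>
        (\<lambda>k. g \<theta> n (xs k)) \<longlonglongrightarrow> g \<theta> n x"
    and tight_iter: "tight (\<lambda>n. (Tmap \<nu> g ^^ n) (return borel 0))"
  shows "\<exists>\<mu>. law_on_S \<mu>
           \<and> weak_conv_m (\<lambda>n. (Tmap \<nu> g ^^ n) (return borel 0)) \<mu>
           \<and> Tmap \<nu> g \<mu> = \<mu>
           \<and> (\<forall>(P :: 'w measure) XiN X. invariant_RTP P T \<nu> g \<mu> XiN X \<longrightarrow> endogenous P \<nu> XiN X)"
proof -
  interpret L: L15 T \<nu> g
    by (rule L15.intro[OF assms])
  show ?thesis using L.mu_law L.mu_weak L.mu_fixed L.endog by blast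
qed

end
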